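(* Let $t_0\in\mathbb R$ and let $g,h,y$ be non-negative locally integrable functions on $(t_0,\infty)$ such that $dy/dt$ is locally integrable on $(t_0,\infty)$ and $$\frac{dy}{dt}\le g(t)y(t)+h(t)\quad\forall t\ge t_0 .$$ Suppose there are $a_1,a_2,a_3\ge0$ with $\int_t^{t+1}g\,ds\le a_1$, $\int_t^{t+1}h\,ds\le a_2$, $\int_t^{t+1}y\,ds\le a_3$ for all $t\ge t_0$, and that for all $t>t_0$, $\int_{t_0}^t\big(g(s)y(s)+h(s)\big)ds\le P(t)$ for a non-negative function $P$. Then for all $t>t_0$, $$y(t)\le\Big(\frac{a_3}{t-t_0}+2a_2+a_3\Big)e^{a_1}+P(t).$$
   Context: The uniform Gronwall inequality (used as a known fact): under the first set of hypotheses with integrals over windows of length $r>0$ bounded by $a_1,a_2,a_3$, one has $y(t+r)\le(a_3/r+a_2)e^{a_1}$ for all $t\ge t_0$. *)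

theory Defs
  imports "HOL-Analysis.Analysis"
begin

end

theory Submission
  imports Defs
begin

theorem mainTheorem18:
  fixes t0 a1 a2 a3 :: real and g h y y' P :: "real \<Rightarrow> real"
  assumes g_nonneg: "\<And>t. t > t0 \<Longrightarrow> g t \<ge> 0"
    and h_nonneg: "\<And>t. t > t0 \<Longrightarrow> h t \<ge> 0"
    and y_nonneg: "\<And>t. t > t0 \<Longrightarrow> y t \<ge> 0"
    and g_int: "\<And>b. g integrable_on {t0..b}"
    and h_int: "\<And>b. h integrable_on {t0..b}"
    and y_int: "\<And>b. y integrable_on {t0..b}"
    and y'_int: "\<And>a b. t0 < a \<Longrightarrow> y' integrable_on {a..b}"
    and y_weak_deriv: "\<And>a b. t0 < a \<Longrightarrow> a \<le> b \<Longrightarrow> y b - y a = integral {a..b} y'"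
    and diff_ineq: "\<And>t. t \<ge> t0 \<Longrightarrow> y' t \<le> g t * y t + h t"
    and a_nonneg: "a1 \<ge> 0" "a2 \<ge> 0" "a3 \<ge> 0"
    and g_win: "\<And>t. t \<ge> t0 \<Longrightarrow> integral {t..t+1} g \<le> a1"
    and h_win: "\<And>t. t \<ge> t0 \<Longrightarrow> integral {t..t+1} h \<le> a2"
    and y_win: "\<And>t. t \<ge> t0 \<Longrightarrow> integral {t..t+1} y \<le> a3"
    and gyh_int: "\<And>t. t > t0 \<Longrightarrow> (\<lambda>s. g s * y s + h s) integrable_on {t0..t}"
    and P_bound: "\<And>t. t > t0 \<Longrightarrow> integral {t0..t} (\<lambda>s. g s * y s + h s) \<le> P t"
    and P_nonneg: "\<And>t. t > t0 \<Longrightarrow> P t \<ge> 0"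
  shows "\<And>t. t > t0 \<Longrightarrow> y t \<le> (a3 / (t - t0) + 2 * a2 + a3) * exp a1 + P t"
proof -
  fix t assume tt: "t > t0"
  define F where "F = (\<lambda>s. g s * y s + h s)"
  have L: "y t - P t \<le> y a" if a: "t0 < a" "a \<le> t" for a
  proof -
    have Fi: "F integrable_on {t0..t}" using gyh_int[OF tt] by (simp add: F_def)
    have Fa: "F integrable_on {t0..a}" "F integrable_on {a..t}"
      using integrable_on_subinterval[OF Fi] a by auto
    have comb: "integral {t0..a} F + integral {a..t} F = integral {t0..t} F"
      using Henstock_Kurzweil_Integration.integral_combine[OF _ _ Fi] a by auto
    have sp: "integral {t0..a} F = integral {t0..a} (\<lambda>s. if s = t0 then 0 else F s)"
      by (rule integral_spike[where S="{t0}"]) auto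
    have "0 \<le> integral {t0..a} (\<lambda>s. if s = t0 then 0 else F s)"
      apply (rule integral_nonneg)
      using Fa(1) apply (rule integrable_spike[where S="{t0}"]) apply auto[2]
      using g_nonneg h_nonneg y_nonneg by (auto simp: F_def)
    hence "integral {a..t} F \<le> P t" using comb sp P_bound[OF tt] by (simp add: F_def)
    moreover have "integral {a..t} y' \<le> integral {a..t} F"
      apply (rule integral_le[OF y'_int[OF a(1)] Fa(2)])
      using diff_ineq a by (auto simp: F_def)
    ultimately show ?thesis using y_weak_deriv[OF a] by linarith
  qed
  have B0: "0 \<le> a3 / (t - t0) + 2 * a2 + a3" using a_nonneg tt by auto
  have B: "a3 / (t - t0) + 2 * a2 + a3 \<le> (a3 / (t - t0) + 2 * a2 + a3) * exp a1"
    using B0 a_nonneg(1) by (simp add: mult_le_cancel_left1)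
  show "y t \<le> (a3 / (t - t0) + 2 * a2 + a3) * exp a1 + P t"
  proof (cases "t - t0 \<le> 1")
    case True
    define f where "f = (\<lambda>a. if a = t0 then y t - P t else y a)"
    have fe: "integral {t0..t} f = integral {t0..t} y"
      by (rule integral_spike[where S="{t0}"]) (auto simp: f_def)
    have fi: "f integrable_on {t0..t}"
      using y_int by (rule integrable_spike[where S="{t0}"]) (auto simp: f_def)
    have "integral {t0..t} (\<lambda>_. y t - P t) \<le> integral {t0..t} f"
      by (rule integral_le[OF _ fi]) (use L in \<open>auto simp: f_def\<close>)
    hence 1: "(y t - P t) * (t - t0) \<le> integral {t0..t} y" using tt fe by (simp add: mult.commute)
    have yi: "y integrable_on {t0..t0+1}" by (rule y_int)
    have comb: "integral {t0..t} y + integral {t..t0+1} y = integral {t0..t0+1} y"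
      using Henstock_Kurzweil_Integration.integral_combine[OF _ _ yi] True tt by auto
    have "0 \<le> integral {t..t0+1} y"
      apply (rule integral_nonneg)
      using integrable_on_subinterval[OF yi] tt apply auto[1]
      using y_nonneg tt by auto
    hence "integral {t0..t} y \<le> a3" using comb y_win[of t0] by simp
    hence "(y t - P t) * (t - t0) \<le> a3" using 1 by linarith
    hence "y t - P t \<le> a3 / (t - t0)" using tt by (simp add: field_simps)
    thus ?thesis using B a_nonneg by linarith
  next
    case False
    have yi: "y integrable_on {t-1..t}"
      using integrable_on_subinterval[OF y_int[of t]] False by auto
    have "integral {t-1..t} (\<lambda>_. y t - P t) \<le> integral {t-1..t} y"
      by (rule integral_le[OF _ yi]) (use L False in auto)
    hence "y t - P t \<le> integral {t-1..t} y" by simp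
    moreover have "integral {t-1..t} y \<le> a3" using y_win[of "t-1"] False by simp
    moreover have "a3 \<le> a3 / (t - t0) + 2 * a2 + a3" using B0 a_nonneg tt by simp
    ultimately show ?thesis using B by linarith
  qed
qed

end
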